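(* Let $p$ be a prime number and let $A=\{1,p,p^2,p^3,\dots\}$. For every positive integer $n$, $$\sum_{k=1}^{n}N^p_A(k)\big(q^e_A(n-k)-q^o_A(n-k)\big)=\vartheta_p(n)+1.$$
   Context: For a set $A$ of positive integers, $N^p_A(n)$ is the total number of parts, summed over all partitions of $n$ with parts in $A$. $q^e_A(m)$ (resp. $q^o_A(m)$) is the number of partitions of $m$ into pairwise distinct parts from $A$ with an even (resp. odd) number of parts; $q^e_A(0)=1$, $q^o_A(0)=0$. $\vartheta_p(n)$ is the $p$-adic valuation of $n$. *)

theory Defs
  imports "HOL-Library.Multiset" "HOL-Computational_Algebra.Primes"
begin

definition partitions_in :: "nat set \<Rightarrow> nat \<Rightarrow> nat multiset set" where
  "partitions_in A n = {M. set_mset M \<subseteq> A \<and> 0 \<notin># M \<and> sum_mset M = n}"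

definition Np :: "nat set \<Rightarrow> nat \<Rightarrow> nat" where
  "Np A n = (\<Sum>M\<in>partitions_in A n. size M)"

definition distinct_partitions_in :: "nat set \<Rightarrow> nat \<Rightarrow> nat set set" where
  "distinct_partitions_in A m = {S. finite S \<and> S \<subseteq> A \<and> 0 \<notin> S \<and> \<Sum>S = m}"

definition q_even :: "nat set \<Rightarrow> nat \<Rightarrow> nat" where
  "q_even A m = card {S \<in> distinct_partitions_in A m. even (card S)}"

definition q_odd :: "nat set \<Rightarrow> nat \<Rightarrow> nat" where
  "q_odd A m = card {S \<in> distinct_partitions_in A m. odd (card S)}"

end

theory Submission imports Defs "HOL-Computational_Algebra.Formal_Power_Series" begin

lemma part_insert:
  assumes "b \<notin> B" "b > 0"
  shows "partitions_in (insert b B) n =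
     (\<Union>j\<in>{..n div b}. (\<lambda>M. M + replicate_mset j b) ` partitions_in B (n - j*b))"
proof
  show "partitions_in (insert b B) n \<subseteq> (\<Union>j\<in>{..n div b}. (\<lambda>M. M + replicate_mset j b) ` partitions_in B (n - j*b))"
  proof
    fix M assume M: "M \<in> partitions_in (insert b B) n"
    define j where "j = count M b"
    define M0 where "M0 = filter_mset (\<lambda>x. x \<noteq> b) M"
    have eq: "M = M0 + replicate_mset j b"
      unfolding M0_def j_def using multiset_partition[of M "\<lambda>x. x \<noteq> b"]
      by (metis (mono_tags, lifting) filter_eq_replicate_mset filter_mset_cong union_commute not_not)
    have s: "sum_mset M = sum_mset M0 + j*b" by (subst eq) (simp add: sum_mset_replicate_mset)
    have "sum_mset M = n" using M by (simp add: partitions_in_def)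
    hence jb: "j*b \<le> n" using s by linarith
    hence "j \<le> n div b" using assms(2) by (metis div_le_mono nonzero_mult_div_cancel_right not_gr0)
    moreover have "M0 \<in> partitions_in B (n - j*b)"
      using M s \<open>sum_mset M = n\<close> unfolding partitions_in_def M0_def by auto
    ultimately show "M \<in> (\<Union>j\<in>{..n div b}. (\<lambda>M. M + replicate_mset j b) ` partitions_in B (n - j*b))"
      using eq by blast
  qed
next
  show "(\<Union>j\<in>{..n div b}. (\<lambda>M. M + replicate_mset j b) ` partitions_in B (n - j*b)) \<subseteq> partitions_in (insert b B) n"
  proof (rule subsetI)
    fix M' assume "M' \<in> (\<Union>j\<in>{..n div b}. (\<lambda>M. M + replicate_mset j b) ` partitions_in B (n - j*b))"
    then obtain j M where j: "j \<in> {..n div b}" and M: "M \<in> partitions_in B (n - j*b)" and MM: "M' = M + replicate_mset j b"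
      by blast
    have "j*b \<le> n" using j using less_eq_div_iff_mult_less_eq[OF assms(2)] by simp
    thus "M' \<in> partitions_in (insert b B) n"
      using M assms unfolding partitions_in_def MM by (auto simp: sum_mset_replicate_mset)
  qed
qed

lemma part_disj:
  assumes "b \<notin> B" "i \<noteq> j"
  shows "(\<lambda>M. M + replicate_mset i b) ` partitions_in B x \<inter> (\<lambda>M. M + replicate_mset j b) ` partitions_in B y = {}"
proof (rule ccontr)
  assume "\<not> ?thesis"
  then obtain M M' where M: "M \<in> partitions_in B x" "M' \<in> partitions_in B y"
    and e: "M + replicate_mset i b = M' + replicate_mset j b" by blast
  have "count M b = 0" "count M' b = 0" using M assms(1) unfolding partitions_in_def
    by (auto simp: count_eq_zero_iff)
  hence "count (M + replicate_mset i b) b = i" "count (M' + replicate_mset j b) b = j" by auto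
  with e assms(2) show False by simp
qed

lemma part_empty: "partitions_in {} n = (if n = 0 then {{#}} else {})"
  unfolding partitions_in_def by auto

lemma part_finite: "finite B \<Longrightarrow> 0 \<notin> B \<Longrightarrow> finite (partitions_in B n)"
proof (induction B arbitrary: n rule: finite_induct)
  case empty then show ?case by (simp add: part_empty)
next
  case (insert b B)
  then show ?case by (subst part_insert) auto
qed

lemma card_part_insert:
  assumes "finite B" "0 \<notin> insert b B" "b \<notin> B"
  shows "card (partitions_in (insert b B) n) = (\<Sum>j\<le>n div b. card (partitions_in B (n - j*b)))"
proof -
  have b: "b > 0" using assms by auto
  have "card (partitions_in (insert b B) n) = (\<Sum>j\<le>n div b. card ((\<lambda>M. M + replicate_mset j b) ` partitions_in B (n - j*b)))"
    unfolding part_insert[OF assms(3) b]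
    by (rule card_UN_disjoint) (use assms part_finite part_disj in auto)
  also have "\<dots> = (\<Sum>j\<le>n div b. card (partitions_in B (n - j*b)))"
    by (rule sum.cong) (auto intro!: card_image simp: inj_on_def)
  finally show ?thesis .
qed

lemma Np_insert:
  assumes "finite B" "0 \<notin> insert b B" "b \<notin> B"
  shows "Np (insert b B) n = (\<Sum>j\<le>n div b. Np B (n - j*b) + j * card (partitions_in B (n - j*b)))"
proof -
  have b: "b > 0" using assms by auto
  have "Np (insert b B) n = (\<Sum>j\<le>n div b. \<Sum>M\<in>(\<lambda>M. M + replicate_mset j b) ` partitions_in B (n - j*b). size M)"
    unfolding Np_def part_insert[OF assms(3) b]
    by (rule sum.UNION_disjoint) (use assms part_finite part_disj in auto)
  also have "\<dots> = (\<Sum>j\<le>n div b. \<Sum>M\<in>partitions_in B (n - j*b). size M + j)"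
    by (rule sum.cong; simp) (subst sum.reindex, auto simp: inj_on_def)
  also have "\<dots> = (\<Sum>j\<le>n div b. Np B (n - j*b) + j * card (partitions_in B (n - j*b)))"
    by (simp add: Np_def sum.distrib mult.commute)
  finally show ?thesis .
qed

lemma dp_finite: "finite B \<Longrightarrow> finite (distinct_partitions_in B n)"
  unfolding distinct_partitions_in_def by (rule finite_subset[of _ "Pow B"]) auto

lemma dp_insert:
  assumes "b \<notin> B" "b > 0"
  shows "{S \<in> distinct_partitions_in (insert b B) n. P (card S)} =
     {S \<in> distinct_partitions_in B n. P (card S)} \<union>
     insert b ` {S \<in> distinct_partitions_in B (n - b). P (Suc (card S)) \<and> b \<le> n}"
proof (intro equalityI subsetI)
  fix S assume S: "S \<in> {S \<in> distinct_partitions_in (insert b B) n. P (card S)}"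
  have fS: "finite S" and sub: "S \<subseteq> insert b B" and z: "0 \<notin> S" and sS: "\<Sum>S = n" and PS: "P (card S)"
    using S by (simp_all add: distinct_partitions_in_def)
  show "S \<in> {S \<in> distinct_partitions_in B n. P (card S)} \<union>
     insert b ` {S \<in> distinct_partitions_in B (n - b). P (Suc (card S)) \<and> b \<le> n}"
  proof (cases "b \<in> S")
    case True
    have e: "S = insert b (S - {b})" using True by blast
    have sm: "\<Sum>S = b + \<Sum>(S - {b})" using sum.remove[OF fS True, of "\<lambda>x. x"] by simp
    have cd: "card S = Suc (card (S - {b}))" by (rule card.remove[OF fS True])
    have "S - {b} \<subseteq> B" using sub by blast
    moreover have "0 \<notin> S - {b}" using z by blast
    moreover have "\<Sum>(S - {b}) = n - b" using sm sS by simp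
    moreover have "finite (S - {b})" using fS by simp
    ultimately have "S - {b} \<in> distinct_partitions_in B (n - b)" by (simp add: distinct_partitions_in_def)
    moreover have "P (Suc (card (S - {b})))" using PS cd by simp
    moreover have "b \<le> n" using sm sS by simp
    ultimately have "S - {b} \<in> {S \<in> distinct_partitions_in B (n - b). P (Suc (card S)) \<and> b \<le> n}" by blast
    then show ?thesis using e by blast
  next
    case False
    then have "S \<subseteq> B" using sub by blast
    then have "S \<in> {S \<in> distinct_partitions_in B n. P (card S)}" using fS z sS PS by (simp add: distinct_partitions_in_def)
    then show ?thesis by blast
  qed
next
  fix S assume "S \<in> {S \<in> distinct_partitions_in B n. P (card S)} \<union>
     insert b ` {S \<in> distinct_partitions_in B (n - b). P (Suc (card S)) \<and> b \<le> n}"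
  then show "S \<in> {S \<in> distinct_partitions_in (insert b B) n. P (card S)}"
  proof
    assume "S \<in> {S \<in> distinct_partitions_in B n. P (card S)}"
    then show ?thesis unfolding distinct_partitions_in_def by blast
  next
    assume "S \<in> insert b ` {S \<in> distinct_partitions_in B (n - b). P (Suc (card S)) \<and> b \<le> n}"
    then obtain T where T: "T \<in> distinct_partitions_in B (n - b)" "P (Suc (card T))" "b \<le> n" "S = insert b T"
      by blast
    have fT: "finite T" and sub: "T \<subseteq> B" and z: "0 \<notin> T" and sT: "\<Sum>T = n - b"
      using T(1) by (simp_all add: distinct_partitions_in_def)
    have bT: "b \<notin> T" using sub assms(1) by blast
    have "\<Sum>S = n" using T(3,4) sT fT bT by simp
    moreover have "card S = Suc (card T)" using T(4) fT bT by simp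
    moreover have "S \<subseteq> insert b B" "0 \<notin> S" "finite S" using T(4) sub z assms(2) fT by auto
    ultimately show ?thesis using T(2) by (simp add: distinct_partitions_in_def)
  qed
qed

lemma card_dp_insert:
  assumes "finite B" "b \<notin> B" "b > 0"
  shows "card {S \<in> distinct_partitions_in (insert b B) n. P (card S)} =
     card {S \<in> distinct_partitions_in B n. P (card S)} +
     (if b \<le> n then card {S \<in> distinct_partitions_in B (n - b). P (Suc (card S))} else 0)"
proof -
  define X where "X = {S \<in> distinct_partitions_in B (n - b). P (Suc (card S)) \<and> b \<le> n}"
  have fX: "finite X" unfolding X_def using dp_finite[OF assms(1)] by simp
  have f1: "finite {S \<in> distinct_partitions_in B n. P (card S)}" using dp_finite[OF assms(1)] by simp
  have bX: "b \<notin> S" if "S \<in> distinct_partitions_in B m" for S m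
    using that assms(2) unfolding distinct_partitions_in_def by blast
  have disj: "{S \<in> distinct_partitions_in B n. P (card S)} \<inter> insert b ` X = {}"
    using bX by blast
  have "card {S \<in> distinct_partitions_in (insert b B) n. P (card S)} =
     card {S \<in> distinct_partitions_in B n. P (card S)} + card (insert b ` X)"
    unfolding dp_insert[OF assms(2,3)] X_def[symmetric]
    by (rule card_Un_disjoint[OF f1 finite_imageI[OF fX] disj])
  also have "card (insert b ` X) = card X"
  proof (rule card_image, rule inj_onI)
    fix S T assume "S \<in> X" "T \<in> X" "insert b S = insert b T"
    moreover have "b \<notin> S" "b \<notin> T" using \<open>S \<in> X\<close> \<open>T \<in> X\<close> bX unfolding X_def by auto
    ultimately show "S = T" by (metis Diff_insert_absorb)
  qed
  also have "X = (if b \<le> n then {S \<in> distinct_partitions_in B (n - b). P (Suc (card S))} else {})"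
    unfolding X_def by auto
  finally show ?thesis by simp
qed

unbundle fps_syntax

definition CC :: "nat set \<Rightarrow> int fps" where "CC B = Abs_fps (\<lambda>n. int (card (partitions_in B n)))"
definition NN :: "nat set \<Rightarrow> int fps" where "NN B = Abs_fps (\<lambda>n. int (Np B n))"
definition QQ :: "nat set \<Rightarrow> int fps" where "QQ B = Abs_fps (\<lambda>n. int (q_even B n) - int (q_odd B n))"
definition GG :: "nat \<Rightarrow> int fps" where "GG b = Abs_fps (\<lambda>n. if b dvd n then 1 else 0)"
definition HH :: "nat \<Rightarrow> int fps" where "HH b = Abs_fps (\<lambda>n. if b dvd n then int (n div b) else 0)"
definition DD :: "nat \<Rightarrow> int fps" where "DD b = Abs_fps (\<lambda>n. if b dvd n \<and> n > 0 then 1 else 0)"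

lemma sum_dvd_reindex:
  fixes g :: "nat \<Rightarrow> int"
  assumes b: "b > 0"
  shows "(\<Sum>i=0..n. if b dvd i then g i else 0) = (\<Sum>j\<le>n div b. g (j*b))"
proof -
  have im: "(\<lambda>j. j*b) ` {..n div b} = {i \<in> {0..n}. b dvd i}"
  proof (intro equalityI subsetI)
    fix i assume "i \<in> (\<lambda>j. j*b) ` {..n div b}"
    then show "i \<in> {i \<in> {0..n}. b dvd i}" using less_eq_div_iff_mult_less_eq[OF b] by auto
  next
    fix i assume "i \<in> {i \<in> {0..n}. b dvd i}"
    then obtain j where "i = j*b" "j*b \<le> n" by (metis atLeastAtMost_iff dvd_def mem_Collect_eq mult.commute)
    then show "i \<in> (\<lambda>j. j*b) ` {..n div b}" using less_eq_div_iff_mult_less_eq[OF b] by auto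
  qed
  have "(\<Sum>j\<le>n div b. g (j*b)) = sum g ((\<lambda>j. j*b) ` {..n div b})"
    by (subst sum.reindex) (use b in \<open>auto simp: inj_on_def\<close>)
  also have "\<dots> = (\<Sum>i=0..n. if b dvd i then g i else 0)"
    unfolding im by (rule sum.inter_filter) simp
  finally show ?thesis by simp
qed

lemma GG_mult_nth: "b > 0 \<Longrightarrow> (GG b * f) $ n = (\<Sum>j\<le>n div b. f $ (n - j*b))"
proof -
  assume b: "b > 0"
  have "(\<Sum>i=0..n. GG b $ i * f $ (n - i)) = (\<Sum>i=0..n. if b dvd i then f $ (n - i) else 0)"
    by (rule sum.cong) (auto simp: GG_def)
  then show ?thesis unfolding fps_mult_nth using sum_dvd_reindex[OF b, of "\<lambda>i. f $ (n - i)" n] by simp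
qed

lemma HH_mult_nth: "b > 0 \<Longrightarrow> (HH b * f) $ n = (\<Sum>j\<le>n div b. of_nat j * f $ (n - j*b))"
proof -
  assume b: "b > 0"
  have "(\<Sum>i=0..n. HH b $ i * f $ (n - i)) = (\<Sum>i=0..n. if b dvd i then int (i div b) * f $ (n - i) else 0)"
    by (rule sum.cong) (auto simp: HH_def)
  then show ?thesis unfolding fps_mult_nth using sum_dvd_reindex[OF b, of "\<lambda>i. int (i div b) * f $ (n - i)" n] 
    using b by simp
qed

lemma CC_insert:
  assumes "finite B" "0 \<notin> insert b B" "b \<notin> B"
  shows "CC (insert b B) = GG b * CC B"
proof (rule fps_ext)
  fix n
  have b: "b > 0" using assms by auto
  show "CC (insert b B) $ n = (GG b * CC B) $ n"
    unfolding GG_mult_nth[OF b] by (simp add: CC_def card_part_insert[OF assms])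
qed

lemma NN_insert:
  assumes "finite B" "0 \<notin> insert b B" "b \<notin> B"
  shows "NN (insert b B) = GG b * NN B + HH b * CC B"
proof (rule fps_ext)
  fix n
  have b: "b > 0" using assms by auto
  show "NN (insert b B) $ n = (GG b * NN B + HH b * CC B) $ n"
    unfolding fps_add_nth GG_mult_nth[OF b] HH_mult_nth[OF b]
    by (simp add: NN_def CC_def Np_insert[OF assms] sum.distrib)
qed

lemma QQ_insert:
  assumes "finite B" "0 \<notin> insert b B" "b \<notin> B"
  shows "QQ (insert b B) = (1 - fps_X ^ b) * QQ B"
proof (rule fps_ext)
  fix n
  have b: "b > 0" using assms by auto
  have e: "q_even (insert b B) n = q_even B n + (if b \<le> n then q_odd B (n - b) else 0)"
    unfolding q_even_def q_odd_def using card_dp_insert[OF assms(1,3) b, where P=even and n=n] by simp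
  have o: "q_odd (insert b B) n = q_odd B n + (if b \<le> n then q_even B (n - b) else 0)"
    unfolding q_even_def q_odd_def using card_dp_insert[OF assms(1,3) b, where P=odd and n=n] by simp
  show "QQ (insert b B) $ n = ((1 - fps_X ^ b) * QQ B) $ n"
    by (simp add: algebra_simps fps_X_power_mult_nth QQ_def e o)
qed

lemma GG_inv: "b > 0 \<Longrightarrow> GG b * (1 - fps_X ^ b) = 1"
proof (rule fps_ext)
  fix n assume b: "b > 0"
  show "(GG b * (1 - fps_X ^ b)) $ n = (1 :: int fps) $ n"
  proof (cases "n < b")
    case True
    then have "b dvd n \<longleftrightarrow> n = 0" using b by (auto dest: dvd_imp_le)
    then show ?thesis using True by (simp add: algebra_simps fps_X_power_mult_right_nth fps_X_power_mult_nth GG_def)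
  next
    case False
    then have "b dvd n \<longleftrightarrow> b dvd (n - b)" by (simp add: dvd_minus_self)
    then show ?thesis using False b by (simp add: algebra_simps fps_X_power_mult_right_nth fps_X_power_mult_nth GG_def)
  qed
qed

lemma HH_inv: "b > 0 \<Longrightarrow> HH b * (1 - fps_X ^ b) = DD b"
proof (rule fps_ext)
  fix n assume b: "b > 0"
  show "(HH b * (1 - fps_X ^ b)) $ n = DD b $ n"
  proof (cases "n < b")
    case True
    then have "b dvd n \<longleftrightarrow> n = 0" using b by (auto dest: dvd_imp_le)
    then show ?thesis using True by (auto simp: algebra_simps fps_X_power_mult_right_nth fps_X_power_mult_nth HH_def DD_def)
  next
    case False
    then have "b dvd n \<longleftrightarrow> b dvd (n - b)" by (simp add: dvd_minus_self)
    moreover have "b dvd n \<Longrightarrow> n div b = Suc ((n - b) div b)" using False b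
      using le_div_geq[of b n] b False by simp
    ultimately show ?thesis using False b by (auto simp: algebra_simps fps_X_power_mult_right_nth fps_X_power_mult_nth HH_def DD_def)
  qed
qed

lemma dp_empty: "distinct_partitions_in {} n = (if n = 0 then {{}} else {})"
  unfolding distinct_partitions_in_def by auto

lemma q_empty: "q_even {} n = (if n = 0 then 1 else 0)" "q_odd {} n = 0"
proof -
  have e: "{S \<in> distinct_partitions_in {} n. even (card S)} = (if n = 0 then {{}} else {})"
    by (cases "n = 0") (auto simp: dp_empty)
  have o: "{S \<in> distinct_partitions_in {} n. odd (card S)} = {}"
    by (cases "n = 0") (simp_all add: dp_empty)
  show "q_even {} n = (if n = 0 then 1 else 0)" unfolding q_even_def e by simp
  show "q_odd {} n = 0" unfolding q_odd_def o by simp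
qed

lemma part_zero:
  assumes "0 \<notin> B" shows "partitions_in B 0 = {{#}}"
proof (intro equalityI subsetI)
  fix M :: "nat multiset" assume M: "M \<in> partitions_in B 0"
  have "M = {#}"
  proof (rule ccontr)
    assume "M \<noteq> {#}"
    then obtain x where x: "x \<in># M" by (meson multiset_nonemptyE)
    have "x = 0" using M x unfolding partitions_in_def by (simp add: sum_mset_0_iff)
    moreover have "0 \<notin># M" using M unfolding partitions_in_def by simp
    ultimately show False using x by simp
  qed
  then show "M \<in> {{#}}" by simp
next
  fix M :: "nat multiset" assume "M \<in> {{#}}"
  then show "M \<in> partitions_in B 0" unfolding partitions_in_def by simp
qed

lemma main_ind:
  assumes "finite B" "0 \<notin> B"
  shows "CC B * QQ B = 1 \<and> NN B * QQ B = (\<Sum>b\<in>B. DD b)"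
  using assms
proof (induction B rule: finite_induct)
  case empty
  have "CC {} = 1" by (rule fps_ext) (simp add: CC_def part_empty)
  moreover have "NN {} = 0" by (rule fps_ext) (simp add: NN_def Np_def part_empty)
  moreover have "QQ {} = 1" by (rule fps_ext) (simp add: QQ_def q_empty)
  ultimately show ?case by simp
next
  case (insert b B)
  have b: "b > 0" using insert by auto
  have IH: "CC B * QQ B = 1" "NN B * QQ B = (\<Sum>b\<in>B. DD b)" using insert by auto
  have c: "CC (insert b B) = GG b * CC B" by (rule CC_insert) (use insert in auto)
  have q: "QQ (insert b B) = (1 - fps_X ^ b) * QQ B" by (rule QQ_insert) (use insert in auto)
  have nn: "NN (insert b B) = GG b * NN B + HH b * CC B" by (rule NN_insert) (use insert in auto)
  have "CC (insert b B) * QQ (insert b B) = (GG b * (1 - fps_X ^ b)) * (CC B * QQ B)"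
    unfolding c q by (simp only: mult_ac)
  also have "\<dots> = 1" using GG_inv[OF b] IH by simp
  finally have 1: "CC (insert b B) * QQ (insert b B) = 1" .
  have "NN (insert b B) * QQ (insert b B) = (GG b * (1 - fps_X ^ b)) * (NN B * QQ B)
      + (HH b * (1 - fps_X ^ b)) * (CC B * QQ B)"
    unfolding nn q by (simp add: algebra_simps)
  also have "\<dots> = (\<Sum>b\<in>B. DD b) + DD b" using GG_inv[OF b] HH_inv[OF b] IH by simp
  finally show ?case using 1 insert by (simp add: add.commute)
qed

lemma part_restrict:
  assumes "k \<le> n"
  shows "partitions_in A k = partitions_in (A \<inter> {1..n}) k"
proof (intro equalityI subsetI)
  fix M assume M: "M \<in> partitions_in A k"
  have "x \<in> A \<inter> {1..n}" if x: "x \<in># M" for x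
  proof -
    obtain M' where "M = add_mset x M'" using multi_member_split[OF x] by blast
    then have "x \<le> sum_mset M" by simp
    moreover have h: "set_mset M \<subseteq> A" "0 \<notin># M" "sum_mset M = k" using M unfolding partitions_in_def by auto
    moreover have "x \<in> A" using h(1) x by blast
    moreover have "x \<noteq> 0" using h(2) x by metis
    ultimately show ?thesis using assms by auto
  qed
  then show "M \<in> partitions_in (A \<inter> {1..n}) k" using M unfolding partitions_in_def by blast
next
  fix M assume "M \<in> partitions_in (A \<inter> {1..n}) k"
  then show "M \<in> partitions_in A k" unfolding partitions_in_def by blast
qed

lemma dp_restrict:
  assumes "k \<le> n"
  shows "distinct_partitions_in A k = distinct_partitions_in (A \<inter> {1..n}) k"
proof (intro equalityI subsetI)
  fix S assume S: "S \<in> distinct_partitions_in A k"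
  have "x \<in> A \<inter> {1..n}" if x: "x \<in> S" for x
  proof -
    have "finite S" using S unfolding distinct_partitions_in_def by blast
    then have "x \<le> \<Sum>S" using x sum.remove[of S x "\<lambda>x. x"] by simp
    moreover have h: "S \<subseteq> A" "0 \<notin> S" "\<Sum>S = k" using S unfolding distinct_partitions_in_def by auto
    moreover have "x \<in> A" using h(1) x by blast
    moreover have "x \<noteq> 0" using h(2) x by metis
    ultimately show ?thesis using assms by auto
  qed
  then show "S \<in> distinct_partitions_in (A \<inter> {1..n}) k" using S unfolding distinct_partitions_in_def by blast
next
  fix S assume "S \<in> distinct_partitions_in (A \<inter> {1..n}) k"
  then show "S \<in> distinct_partitions_in A k" unfolding distinct_partitions_in_def by blast
qed

theorem corollary7:
  fixes p n :: nat
  assumes "prime p" and "n > 0"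
  defines "A \<equiv> range (\<lambda>i::nat. p ^ i)"
  shows "(\<Sum>k=1..n. int (Np A k) * (int (q_even A (n - k)) - int (q_odd A (n - k))))
           = int (multiplicity p n) + 1"
proof -
  define B where "B = A \<inter> {1..n}"
  have fB: "finite B" "0 \<notin> B" unfolding B_def by auto
  have 1: "Np A k = Np B k" if "k \<le> n" for k unfolding Np_def B_def using part_restrict[OF that] by simp
  have 2: "q_even A m = q_even B m" "q_odd A m = q_odd B m" if "m \<le> n" for m
    unfolding q_even_def q_odd_def B_def using dp_restrict[OF that] by simp_all
  have "(\<Sum>k=1..n. int (Np A k) * (int (q_even A (n - k)) - int (q_odd A (n - k))))
      = (\<Sum>k=1..n. NN B $ k * QQ B $ (n - k))"
    by (rule sum.cong) (auto simp: NN_def QQ_def 1 2)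
  also have "\<dots> = (\<Sum>k=0..n. NN B $ k * QQ B $ (n - k))"
    by (simp add: sum.atLeast_Suc_atMost NN_def Np_def part_zero[OF fB(2)])
  also have "\<dots> = (NN B * QQ B) $ n" by (simp add: fps_mult_nth)
  also have "\<dots> = (\<Sum>b\<in>B. DD b $ n)" using main_ind[OF fB] by (simp add: fps_sum_nth)
  also have "\<dots> = int (card {b \<in> B. b dvd n})"
    using fB assms(2) by (simp add: DD_def sum.inter_filter[symmetric])
  also have "{b \<in> B. b dvd n} = (\<lambda>i. p ^ i) ` {..multiplicity p n}"
  proof (intro equalityI subsetI)
    fix b assume "b \<in> {b \<in> B. b dvd n}"
    then obtain i where "b = p ^ i" "p ^ i dvd n" unfolding B_def A_def by auto
    moreover have "p \<noteq> 0" "\<not> is_unit p" using assms(1) by auto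
    ultimately show "b \<in> (\<lambda>i. p ^ i) ` {..multiplicity p n}"
      using assms(2) power_dvd_iff_le_multiplicity[of n p i] by auto
  next
    fix b assume "b \<in> (\<lambda>i. p ^ i) ` {..multiplicity p n}"
    then obtain i where i: "b = p ^ i" "i \<le> multiplicity p n" by auto
    then have d: "b dvd n" using multiplicity_dvd' by blast
    then have "b \<le> n" using assms(2) by (simp add: dvd_imp_le)
    moreover have "b \<ge> 1" using i prime_gt_0_nat[OF assms(1)] by (simp add: Suc_le_eq)
    ultimately show "b \<in> {b \<in> B. b dvd n}" using d i unfolding B_def A_def by auto
  qed
  also have "card \<dots> = Suc (multiplicity p n)"
  proof -
    have "inj_on (\<lambda>i. p ^ i) {..multiplicity p n}"
      using prime_gt_1_nat[OF assms(1)] by (auto simp: inj_on_def)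
    then show ?thesis by (simp add: card_image)
  qed
  finally show ?thesis by simp
qed

end
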